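(* Let $\beta>2\alpha>0$ with $\beta+2\alpha\le1$, and let $\varphi_N(x)=\frac12x^TAx-\sum_{k=1}^{s_N}\log\cosh(x^TAe_k)$ for $x\in\mathbb{R}^{s_N}$. Then $\varphi_N$ takes its global minimum at $x=(0,\dots,0)$.
   Context: $A$ is the $s_N\times s_N$ symmetric circulant matrix $A=\beta I+\alpha(P+P^T)$, where $P$ is the cyclic shift matrix (so $A_{kk}=\beta$, $A_{k,k\pm1}=\alpha$ with indices mod $s_N$); $e_k$ are the standard basis vectors of $\mathbb{R}^{s_N}$. *)

theory Defs
  imports "HOL-Analysis.Analysis"
begin

text \<open>Vectors in R^n are represented as functions nat => real, only indices i < n matter.
  Matrices are nat => nat => real with indices < n.\<close>

definition shiftP :: "nat \<Rightarrow> nat \<Rightarrow> nat \<Rightarrow> real" where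
  "shiftP n i j = (if j = (i + 1) mod n then 1 else 0)"

definition circA :: "nat \<Rightarrow> real \<Rightarrow> real \<Rightarrow> nat \<Rightarrow> nat \<Rightarrow> real" where
  "circA n \<alpha> \<beta> i j = \<beta> * (if i = j then 1 else 0) + \<alpha> * (shiftP n i j + shiftP n j i)"

definition matvec :: "nat \<Rightarrow> (nat \<Rightarrow> nat \<Rightarrow> real) \<Rightarrow> (nat \<Rightarrow> real) \<Rightarrow> nat \<Rightarrow> real" where
  "matvec n M x i = (\<Sum>j<n. M i j * x j)"

definition phiN :: "nat \<Rightarrow> real \<Rightarrow> real \<Rightarrow> (nat \<Rightarrow> real) \<Rightarrow> real" where
  "phiN n \<alpha> \<beta> x =
     (1/2) * (\<Sum>i<n. x i * matvec n (circA n \<alpha> \<beta>) x i)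
     - (\<Sum>k<n. ln (cosh (\<Sum>i<n. x i * circA n \<alpha> \<beta> i k)))"

end

theory Submission
  imports Defs "HOL-Analysis.Analysis"
begin
lemma a1: assumes "k < (n::nat)" shows "(Suc k mod n + n - 1) mod n = k"
proof (cases "Suc k = n")
  case True then show ?thesis using assms by simp
next
  case False then have "Suc k < n" using assms by simp
  then have "Suc k mod n = Suc k" by simp
  then have "Suc k mod n + n - 1 = k + n" by simp
  then show ?thesis using assms by simp
qed
lemma a2: assumes "k < (n::nat)" shows "Suc ((k + n - 1) mod n) mod n = k"
proof (cases "k = 0")
  case True
  then have "(k + n - 1) mod n = n - 1" using assms by simp
  then show ?thesis using True assms by simp
next
  case False
  then have e: "k + n - 1 = (k - 1) + n" by simp
  have "(k - 1 + n) mod n = k - 1" using assms by simp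
  then have "(k + n - 1) mod n = k - 1" using e by simp
  then show ?thesis using False assms by simp
qed

lemma reidx_s:
  assumes "n > 0"
  shows "(\<Sum>k<n. f (Suc k mod n)) = (\<Sum>k<(n::nat). (f k :: real))"
proof (rule sum.reindex_bij_witness[of _ "\<lambda>k. (k + n - 1) mod n" "\<lambda>k. Suc k mod n"])
  fix a assume "a \<in> {..<n}" then have "a < n" by simp
  then show "(Suc a mod n + n - 1) mod n = a" by (rule a1)
  show "Suc a mod n \<in> {..<n}" using assms by simp
  fix b assume "b \<in> {..<n}" then have "b < n" by simp
  then show "Suc ((b + n - 1) mod n) mod n = b" by (rule a2)
  show "(b + n - 1) mod n \<in> {..<n}" using assms by simp
qed simp

lemma reidx_p:
  assumes "n > 0"
  shows "(\<Sum>k<n. f ((k + n - 1) mod n)) = (\<Sum>k<(n::nat). (f k :: real))"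
proof (rule sum.reindex_bij_witness[of _ "\<lambda>k. Suc k mod n" "\<lambda>k. (k + n - 1) mod n"])
  fix a assume "a \<in> {..<n}" then have "a < n" by simp
  then show "Suc ((a + n - 1) mod n) mod n = a" by (rule a2)
  show "(a + n - 1) mod n \<in> {..<n}" using assms by simp
  fix b assume "b \<in> {..<n}" then have "b < n" by simp
  then show "(Suc b mod n + n - 1) mod n = b" by (rule a1)
  show "Suc b mod n \<in> {..<n}" using assms by simp
qed simp

lemma iff_sp: assumes "i < n" "k < (n::nat)" shows "(k = Suc i mod n) \<longleftrightarrow> (i = (k + n - 1) mod n)"
  using a1[OF assms(1)] a2[OF assms(2)] by metis

lemma col:
  assumes k: "k < n"
  shows "(\<Sum>i<n. x i * circA n \<alpha> \<beta> i k) = \<beta> * x k + \<alpha> * (x (Suc k mod n) + x ((k + n - 1) mod n))"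
proof -
  have "(\<Sum>i<n. x i * circA n \<alpha> \<beta> i k) =
     \<beta> * (\<Sum>i<n. if i = k then x i else 0) + \<alpha> * (\<Sum>i<n. if i = (k + n - 1) mod n then x i else 0)
     + \<alpha> * (\<Sum>i<n. if i = Suc k mod n then x i else 0)"
    unfolding circA_def shiftP_def sum_distrib_left sum.distrib[symmetric]
    by (rule sum.cong) (use iff_sp[OF _ k] in \<open>auto simp: algebra_simps\<close>)
  also have "\<dots> = \<beta> * x k + \<alpha> * (x (Suc k mod n) + x ((k + n - 1) mod n))"
    using k by (simp add: algebra_simps)
  finally show ?thesis .
qed

lemma row:
  assumes k: "k < n"
  shows "matvec n (circA n \<alpha> \<beta>) x k = \<beta> * x k + \<alpha> * (x (Suc k mod n) + x ((k + n - 1) mod n))"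
proof -
  have "matvec n (circA n \<alpha> \<beta>) x k = (\<Sum>i<n. x i * circA n \<alpha> \<beta> i k)"
    unfolding matvec_def by (rule sum.cong) (auto simp: circA_def)
  then show ?thesis using col[OF k] by simp
qed

lemma dc: "(cosh has_real_derivative sinh x) (at (x::real))"
  unfolding sinh_def cosh_def by (auto intro!: derivative_eq_intros simp: algebra_simps)
lemma ds: "(sinh has_real_derivative cosh x) (at (x::real))"
  unfolding sinh_def cosh_def by (auto intro!: derivative_eq_intros simp: algebra_simps)

lemma sinh_le_t_cosh: assumes "(t::real) \<ge> 0" shows "sinh t \<le> t * cosh t"
proof -
  have "(\<lambda>u. u * cosh u - sinh u) 0 \<le> (\<lambda>u. u * cosh u - sinh u) t"
  proof (rule deriv_nonneg_imp_mono[where g="\<lambda>u. u * cosh u - sinh u" and g'="\<lambda>u. u * sinh u"])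
    fix u :: real assume "u \<in> {0..t}"
    show "((\<lambda>u. u * cosh u - sinh u) has_real_derivative u * sinh u) (at u)"
      by (auto intro!: derivative_eq_intros dc ds)
    show "0 \<le> u * sinh u" using \<open>u \<in> {0..t}\<close> by simp
  qed (use assms in auto)
  then show ?thesis by simp
qed

lemma ln_cosh_le_pos: assumes "(t::real) \<ge> 0" shows "ln (cosh t) \<le> t^2/2"
proof -
  have "(\<lambda>u. u^2/2 - ln (cosh u)) 0 \<le> (\<lambda>u. u^2/2 - ln (cosh u)) t"
  proof (rule deriv_nonneg_imp_mono[where g="\<lambda>u. u^2/2 - ln (cosh u)" and g'="\<lambda>u. u - sinh u / cosh u"])
    fix u :: real assume u: "u \<in> {0..t}"
    have "cosh u > 0" by (rule cosh_real_pos)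
    then show "((\<lambda>u. u^2/2 - ln (cosh u)) has_real_derivative u - sinh u / cosh u) (at u)"
      by (auto intro!: derivative_eq_intros dc ds)
    show "0 \<le> u - sinh u / cosh u" using sinh_le_t_cosh[of u] u \<open>cosh u > 0\<close>
      by (simp add: field_simps)
  qed (use assms in auto)
  then show ?thesis by simp
qed

lemma ln_cosh_le: "ln (cosh (t::real)) \<le> t^2/2"
proof (cases "t \<ge> 0")
  case True then show ?thesis by (rule ln_cosh_le_pos)
next
  case False then show ?thesis using ln_cosh_le_pos[of "-t"] by simp
qed

theorem lemma4p3:
  fixes n :: nat and \<alpha> \<beta> :: real and x :: "nat \<Rightarrow> real"
  assumes "\<beta> > 2 * \<alpha>" and "2 * \<alpha> > 0" and "\<beta> + 2 * \<alpha> \<le> 1"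
  shows "phiN n \<alpha> \<beta> (\<lambda>_. 0) \<le> phiN n \<alpha> \<beta> x"
proof (cases "n = 0")
  case True then show ?thesis by (simp add: phiN_def)
next
  case False
  then have n: "n > 0" by simp
  define s where "s k = Suc k mod n" for k
  define p where "p k = (k + n - 1) mod n" for k
  define y where "y k = \<beta> * x k + \<alpha> * (x (s k) + x (p k))" for k
  have ps: "p (s k) = k" if "k < n" for k unfolding s_def p_def by (rule a1[OF that])
  have z: "phiN n \<alpha> \<beta> (\<lambda>_. 0) = 0" by (simp add: phiN_def matvec_def)
  have ph: "phiN n \<alpha> \<beta> x = (1/2) * (\<Sum>k<n. x k * y k) - (\<Sum>k<n. ln (cosh (y k)))"
  proof -
    have e1: "(\<Sum>k<n. x k * matvec n (circA n \<alpha> \<beta>) x k) = (\<Sum>k<n. x k * y k)"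
      by (rule sum.cong) (simp_all add: row y_def s_def p_def)
    have e2: "(\<Sum>k<n. ln (cosh (\<Sum>i<n. x i * circA n \<alpha> \<beta> i k))) = (\<Sum>k<n. ln (cosh (y k)))"
      by (rule sum.cong) (simp_all add: col y_def s_def p_def)
    show ?thesis unfolding phiN_def e1 e2 by simp
  qed
  define r where "r = (\<Sum>k<n. x k * x k)"
  define a where "a = (\<Sum>k<n. x k * x (s k))"
  define b where "b = (\<Sum>k<n. x (s k) * x (p k))"
  have F1: "(\<Sum>k<n. x k * x (p k)) = a"
  proof -
    have "(\<Sum>k<n. x (s k) * x (p (s k))) = (\<Sum>k<n. x k * x (p k))"
      using reidx_s[OF n, of "\<lambda>j. x j * x (p j)"] by (simp add: s_def)
    also have "(\<Sum>k<n. x (s k) * x (p (s k))) = a"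
      unfolding a_def by (rule sum.cong) (auto simp: ps)
    finally show ?thesis by simp
  qed
  have F2: "(\<Sum>k<n. x (s k) * x (s k)) = r"
    using reidx_s[OF n, of "\<lambda>j. x j * x j"] by (simp add: s_def r_def)
  have F3: "(\<Sum>k<n. x (p k) * x (p k)) = r"
    using reidx_p[OF n, of "\<lambda>j. x j * x j"] by (simp add: p_def r_def)
  have F4: "(\<Sum>k<n. x k * x (s (s k))) = b"
  proof -
    have "(\<Sum>k<n. x (s (s k)) * x (p (s k))) = b"
      using reidx_s[OF n, of "\<lambda>j. x (s j) * x (p j)"] by (simp add: s_def b_def)
    also have "(\<Sum>k<n. x (s (s k)) * x (p (s k))) = (\<Sum>k<n. x k * x (s (s k)))"
      by (rule sum.cong) (auto simp: ps)
    finally show ?thesis by simp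
  qed
  have F5: "(\<Sum>k<n. x (s (s k)) * x (s (s k))) = r"
    using reidx_s[OF n, of "\<lambda>j. x (s j) * x (s j)"] F2 by (simp add: s_def)
  have G1: "0 \<le> r + a"
  proof -
    have "0 \<le> (\<Sum>k<n. (x k + x (s k))^2)" by (rule sum_nonneg) simp
    also have "\<dots> = r + (\<Sum>k<n. x (s k) * x (s k)) + 2 * a"
      by (simp add: r_def a_def power2_eq_square algebra_simps sum.distrib sum_distrib_left)
    finally show ?thesis using F2 by simp
  qed
  have G2: "0 \<le> r - a"
  proof -
    have "0 \<le> (\<Sum>k<n. (x k - x (s k))^2)" by (rule sum_nonneg) simp
    also have "\<dots> = r + (\<Sum>k<n. x (s k) * x (s k)) - 2 * a"
      by (simp add: r_def a_def power2_eq_square algebra_simps sum.distrib sum_distrib_left sum_subtractf)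
    finally show ?thesis using F2 by simp
  qed
  have G3: "0 \<le> r - b"
  proof -
    have "0 \<le> (\<Sum>k<n. (x k - x (s (s k)))^2)" by (rule sum_nonneg) simp
    also have "\<dots> = r + (\<Sum>k<n. x (s (s k)) * x (s (s k))) - 2 * (\<Sum>k<n. x k * x (s (s k)))"
      by (simp add: r_def power2_eq_square algebra_simps sum.distrib sum_distrib_left sum_subtractf)
    finally show ?thesis using F5 F4 by simp
  qed
  have XY: "(\<Sum>k<n. x k * y k) = \<beta> * r + 2 * \<alpha> * a"
  proof -
    have "(\<Sum>k<n. x k * y k) = \<beta> * r + \<alpha> * a + \<alpha> * (\<Sum>k<n. x k * x (p k))"
      by (simp add: y_def r_def a_def algebra_simps sum.distrib sum_distrib_left)
    then show ?thesis using F1 by simp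
  qed
  have YY: "(\<Sum>k<n. (y k)^2) = \<beta>^2 * r + 2 * \<alpha>^2 * (r + b) + 4 * \<alpha> * \<beta> * a"
  proof -
    have "(\<Sum>k<n. (y k)^2) = \<beta>^2 * r + \<alpha>^2 * ((\<Sum>k<n. x (s k) * x (s k)) + (\<Sum>k<n. x (p k) * x (p k)) + 2 * b)
       + 2 * \<alpha> * \<beta> * (a + (\<Sum>k<n. x k * x (p k)))"
      by (simp add: y_def r_def a_def b_def power2_eq_square algebra_simps sum.distrib sum_distrib_left)
    then show ?thesis using F1 F2 F3 by (simp add: algebra_simps)
  qed
  have f1: "0 \<le> (\<beta> + 2*\<alpha>) * (1 - \<beta> - 2*\<alpha>)" using assms by simp
  have f2: "0 \<le> (\<beta> - 2*\<alpha>) * (1 - \<beta> + 2*\<alpha>)" using assms by simp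
  have Q: "(\<Sum>k<n. x k * y k) - (\<Sum>k<n. (y k)^2) =
      (\<beta> + 2*\<alpha>) * (1 - \<beta> - 2*\<alpha>) * ((r + a)/2) + (\<beta> - 2*\<alpha>) * (1 - \<beta> + 2*\<alpha>) * ((r - a)/2)
      + 2 * \<alpha>^2 * (r - b)"
    unfolding XY YY by (simp add: field_simps power2_eq_square)
  have "0 \<le> (\<Sum>k<n. x k * y k) - (\<Sum>k<n. (y k)^2)"
  proof -
    have t1: "0 \<le> (\<beta> + 2*\<alpha>) * (1 - \<beta> - 2*\<alpha>) * ((r + a)/2)"
      using G1 by (intro mult_nonneg_nonneg[OF f1]) simp
    have t2: "0 \<le> (\<beta> - 2*\<alpha>) * (1 - \<beta> + 2*\<alpha>) * ((r - a)/2)"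
      using G2 by (intro mult_nonneg_nonneg[OF f2]) simp
    have t3: "0 \<le> 2 * \<alpha>^2 * (r - b)"
      using G3 by (intro mult_nonneg_nonneg) simp_all
    show ?thesis unfolding Q using t1 t2 t3 by linarith
  qed
  moreover have "(\<Sum>k<n. ln (cosh (y k))) \<le> (\<Sum>k<n. (y k)^2 / 2)"
    by (rule sum_mono) (rule ln_cosh_le)
  moreover have "(\<Sum>k<n. (y k)^2 / 2) = (\<Sum>k<n. (y k)^2) / 2" by (simp add: sum_divide_distrib)
  ultimately show ?thesis unfolding z ph by linarith
qed
end
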